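(* Let $W,Q$ be symmetric BIDMCs, $p\in(0,1)$ and $\varepsilon\in[0,1]$. If $p\,\mathrm B(\varepsilon)+(1-p)W\preccurlyeq p\,\mathrm B(\varepsilon)+(1-p)Q$, then $W\preccurlyeq Q$.
   Context: A binary-input discrete memoryless channel (BIDMC) $W$ has input $x$ uniformly distributed on $\{0,1\}$, a discrete output alphabet and transition probabilities $\Pr(y\mid x)$. Its LR-profile is $P_W(\varepsilon)=\Pr\big(\mathcal L_W(y)=\varepsilon/(1-\varepsilon)\big)$, where $\mathcal L_W(\hat y)=\Pr(y=\hat y\mid x=0)/\Pr(y=\hat y\mid x=1)$; $W\cong W'$ if their LR-profiles coincide. $W'\preccurlyeq W$ ($W'$ is a degradation of $W$) if there is a channel $R$ from the output alphabet $\mathcal Y$ of $W$ to that of $W'$ with $\Pr(y'\mid x'=a)=\sum_{y\in\mathcal Y}\Pr(y\mid x=a)R(y'\mid y)$, $a\in\{0,1\}$. $\mathrm B(\varepsilon)$ is the binary symmetric channel with crossover probability $\varepsilon$. For BIDMCs $W_1,W_2$ and $p\in[0,1]$, $pW_1+(1-p)W_2$ is the random switching channel that, with probability $p$ (resp. $1-p$), independently of the input, sends the input through $W_1$ (resp. $W_2$) and outputs the channel output together with the index of the channel used. A BIDMC is symmetric if $P_W(\varepsilon)=P_W(1-\varepsilon)$ for all $\varepsilon\in[0,1]$. *)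

theory Defs
  imports Complex_Main
begin

text \<open>A BIDMC is given by its (discrete, here finite) output alphabet Y and its
transition probabilities W x y = Pr(y | x). The input 0 is encoded as False,
the input 1 as True.\<close>

type_synonym 'y channel = "'y set \<times> (bool \<Rightarrow> 'y \<Rightarrow> real)"

definition bidmc :: "'y channel \<Rightarrow> bool" where
  "bidmc C \<longleftrightarrow> (let (Y, W) = C in
     finite Y \<and> (\<forall>a. \<forall>y\<in>Y. 0 \<le> W a y) \<and> (\<forall>a. (\<Sum>y\<in>Y. W a y) = 1))"

text \<open>The likelihood ratio of output y equals eps/(1-eps) (with eps/(1-eps) = infinity
for eps = 1, i.e. Pr(y|1) = 0 < Pr(y|0)).\<close>
definition lr_is :: "'y channel \<Rightarrow> 'y \<Rightarrow> real \<Rightarrow> bool" where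
  "lr_is C y eps \<longleftrightarrow> (let W = snd C in
     (if eps = 1 then W True y = 0 \<and> 0 < W False y
      else 0 < W True y \<and> W False y / W True y = eps / (1 - eps)))"

definition lr_profile :: "'y channel \<Rightarrow> real \<Rightarrow> real" where
  "lr_profile C eps =
     (\<Sum>y\<in>{y\<in>fst C. lr_is C y eps}. (snd C False y + snd C True y) / 2)"

definition symmetric_bidmc :: "'y channel \<Rightarrow> bool" where
  "symmetric_bidmc C \<longleftrightarrow> bidmc C \<and>
     (\<forall>eps\<in>{0..1}. lr_profile C eps = lr_profile C (1 - eps))"

text \<open>degraded C' C: C' is a degradation of C (C' \<preccurlyeq> C).\<close>
definition degraded :: "'z channel \<Rightarrow> 'y channel \<Rightarrow> bool" where
  "degraded C' C \<longleftrightarrow> (let (Y', W') = C'; (Y, W) = C in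
     \<exists>R :: 'y \<Rightarrow> 'z \<Rightarrow> real.
       (\<forall>y\<in>Y. \<forall>y'\<in>Y'. 0 \<le> R y y') \<and>
       (\<forall>y\<in>Y. (\<Sum>y'\<in>Y'. R y y') = 1) \<and>
       (\<forall>a. \<forall>y'\<in>Y'. W' a y' = (\<Sum>y\<in>Y. W a y * R y y')))"

definition bsc :: "real \<Rightarrow> bool channel" where
  "bsc eps = (UNIV, \<lambda>x y. if y = x then 1 - eps else eps)"

definition switch :: "real \<Rightarrow> 'a channel \<Rightarrow> 'b channel \<Rightarrow> ('a + 'b) channel" where
  "switch p C1 C2 = (fst C1 <+> fst C2,
     \<lambda>x z. case z of Inl y \<Rightarrow> p * snd C1 x y | Inr y \<Rightarrow> (1 - p) * snd C2 x y)"

end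

theory Submission imports Defs begin

lemma elim:
  fixes R :: "'s + 'q \<Rightarrow> 's + 'w \<Rightarrow> real"
    and \<beta> :: "bool \<Rightarrow> 's \<Rightarrow> real" and \<kappa> :: "bool \<Rightarrow> 'q \<Rightarrow> real" and \<omega> :: "bool \<Rightarrow> 'w \<Rightarrow> real"
  assumes "finite S" and fq: "finite Yq" and fw: "finite Yw" and w0: "w0 \<in> Yw"
    and nn: "\<And>x y. x \<in> S <+> Yq \<Longrightarrow> y \<in> S <+> Yw \<Longrightarrow> 0 \<le> R x y"
    and rows: "\<And>x. x \<in> S <+> Yq \<Longrightarrow> (\<Sum>t\<in>S. R x (Inl t)) + (\<Sum>w\<in>Yw. R x (Inr w)) = 1"
    and eqS: "\<And>a s. s \<in> S \<Longrightarrow> \<beta> a s = (\<Sum>t\<in>S. \<beta> a t * R (Inl t) (Inl s)) + (\<Sum>q\<in>Yq. \<kappa> a q * R (Inr q) (Inl s))"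
    and eqW: "\<And>a w. w \<in> Yw \<Longrightarrow> \<omega> a w = (\<Sum>t\<in>S. \<beta> a t * R (Inl t) (Inr w)) + (\<Sum>q\<in>Yq. \<kappa> a q * R (Inr q) (Inr w))"
  shows "\<exists>K. (\<forall>q\<in>Yq. \<forall>w\<in>Yw. 0 \<le> K q w) \<and> (\<forall>q\<in>Yq. (\<Sum>w\<in>Yw. K q w) = 1) \<and>
     (\<forall>a. \<forall>w\<in>Yw. \<omega> a w = (\<Sum>q\<in>Yq. \<kappa> a q * K q w))"
  using assms(1) nn rows eqS eqW
proof (induction S arbitrary: R rule: finite_induct)
  case empty
  show ?case
    by (rule exI[of _ "\<lambda>q w. R (Inr q) (Inr w)"]) (use empty in auto)
next
  case (insert s S)
  define r where "r = R (Inl s) (Inl s)"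
  define d where "d y = (if r < 1 then R (Inl s) y / (1 - r) else (if y = Inr w0 then 1 else 0))" for y
  define R' where "R' x y = R x y + R x (Inl s) * d y" for x y
  have rs: "r + ((\<Sum>t\<in>S. R (Inl s) (Inl t)) + (\<Sum>w\<in>Yw. R (Inl s) (Inr w))) = 1"
    using insert.prems(2)[of "Inl s"] insert.hyps by (simp add: r_def add.assoc Plus_def)
  have nns: "y \<in> insert s S <+> Yw \<Longrightarrow> 0 \<le> R (Inl s) y" for y
    using insert.prems(1)[of "Inl s" y] by auto
  have r1: "r \<le> 1"
  proof -
    have "0 \<le> (\<Sum>t\<in>S. R (Inl s) (Inl t))" by (rule sum_nonneg) (use nns in auto)
    moreover have "0 \<le> (\<Sum>w\<in>Yw. R (Inl s) (Inr w))" by (rule sum_nonneg) (use nns in auto)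
    ultimately show ?thesis using rs by linarith
  qed
  have rzero: "R (Inl s) y = 0" if "r = 1" "y \<in> S <+> Yw" for y
  proof -
    have A: "(\<Sum>t\<in>S. R (Inl s) (Inl t)) = 0 \<and> (\<Sum>w\<in>Yw. R (Inl s) (Inr w)) = 0"
    proof -
      have "0 \<le> (\<Sum>t\<in>S. R (Inl s) (Inl t))" by (rule sum_nonneg) (use nns in auto)
      moreover have "0 \<le> (\<Sum>w\<in>Yw. R (Inl s) (Inr w))" by (rule sum_nonneg) (use nns in auto)
      ultimately show ?thesis using rs that by linarith
    qed
    show ?thesis using that(2)
    proof
      fix t assume "t \<in> S" "y = Inl t"
      then show ?thesis using A sum_nonneg_eq_0_iff[of S "\<lambda>t. R (Inl s) (Inl t)"] insert.hyps nns by auto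
    next
      fix w assume "w \<in> Yw" "y = Inr w"
      then show ?thesis using A sum_nonneg_eq_0_iff[of Yw "\<lambda>w. R (Inl s) (Inr w)"] fw nns by auto
    qed
  qed
  have dnn: "0 \<le> d y" if "y \<in> S <+> Yw" for y
  proof -
    have "y \<in> insert s S <+> Yw" using that by auto
    then have "0 \<le> R (Inl s) y" by (rule nns)
    then show ?thesis using r1 by (auto simp: d_def)
  qed
  have dsum: "(\<Sum>t\<in>S. d (Inl t)) + (\<Sum>w\<in>Yw. d (Inr w)) = 1"
  proof (cases "r < 1")
    case True
    then have "(\<Sum>t\<in>S. d (Inl t)) + (\<Sum>w\<in>Yw. d (Inr w)) =
       ((\<Sum>t\<in>S. R (Inl s) (Inl t)) + (\<Sum>w\<in>Yw. R (Inl s) (Inr w))) / (1 - r)"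
      by (simp add: d_def sum_divide_distrib add_divide_distrib)
    also have "\<dots> = 1" using rs True by (simp add: field_simps)
    finally show ?thesis .
  next
    case False
    then show ?thesis using w0 fw by (simp add: d_def)
  qed
  have key: "((\<Sum>t\<in>S. \<beta> a t * R (Inl t) (Inl s)) + (\<Sum>q\<in>Yq. \<kappa> a q * R (Inr q) (Inl s))) * d y
        = \<beta> a s * R (Inl s) y" if "y \<in> S <+> Yw" for a y
  proof -
    have F: "(\<Sum>t\<in>S. \<beta> a t * R (Inl t) (Inl s)) + (\<Sum>q\<in>Yq. \<kappa> a q * R (Inr q) (Inl s)) = \<beta> a s * (1 - r)"
      using insert.prems(3)[of s a] insert.hyps by (simp add: r_def algebra_simps)
    show ?thesis
    proof (cases "r < 1")
      case True then show ?thesis by (simp add: F d_def)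
    next
      case False
      then have "r = 1" using r1 by simp
      then show ?thesis using F rzero[OF _ that] by simp
    qed
  qed
  have "\<exists>K. (\<forall>q\<in>Yq. \<forall>w\<in>Yw. 0 \<le> K q w) \<and> (\<forall>q\<in>Yq. (\<Sum>w\<in>Yw. K q w) = 1) \<and>
     (\<forall>a. \<forall>w\<in>Yw. \<omega> a w = (\<Sum>q\<in>Yq. \<kappa> a q * K q w))"
  proof (rule insert.IH)
    fix x y assume x: "x \<in> S <+> Yq" and y: "y \<in> S <+> Yw"
    have x': "x \<in> insert s S <+> Yq" using x by auto
    have y': "y \<in> insert s S <+> Yw" "Inl s \<in> insert s S <+> Yw" using y by auto
    have "0 \<le> R x y" "0 \<le> R x (Inl s)" using insert.prems(1)[OF x'] y' by auto
    then show "0 \<le> R' x y" unfolding R'_def using dnn[OF y] by simp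
  next
    fix x assume x: "x \<in> S <+> Yq"
    have x': "x \<in> insert s S <+> Yq" using x by auto
    have "(\<Sum>t\<in>S. R' x (Inl t)) + (\<Sum>w\<in>Yw. R' x (Inr w)) =
      (\<Sum>t\<in>S. R x (Inl t)) + (\<Sum>w\<in>Yw. R x (Inr w)) + R x (Inl s) * ((\<Sum>t\<in>S. d (Inl t)) + (\<Sum>w\<in>Yw. d (Inr w)))"
      by (simp add: R'_def sum.distrib sum_distrib_left algebra_simps)
    also have "\<dots> = 1" using insert.prems(2)[OF x'] insert.hyps dsum by simp
    finally show "(\<Sum>t\<in>S. R' x (Inl t)) + (\<Sum>w\<in>Yw. R' x (Inr w)) = 1" .
  next
    fix a s' assume s': "s' \<in> S"
    have "(\<Sum>t\<in>S. \<beta> a t * R' (Inl t) (Inl s')) + (\<Sum>q\<in>Yq. \<kappa> a q * R' (Inr q) (Inl s')) =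
       (\<Sum>t\<in>S. \<beta> a t * R (Inl t) (Inl s')) + (\<Sum>q\<in>Yq. \<kappa> a q * R (Inr q) (Inl s')) +
       ((\<Sum>t\<in>S. \<beta> a t * R (Inl t) (Inl s)) + (\<Sum>q\<in>Yq. \<kappa> a q * R (Inr q) (Inl s))) * d (Inl s')"
      by (simp add: R'_def sum.distrib sum_distrib_left sum_distrib_right algebra_simps)
    also have "\<dots> = \<beta> a s'"
      using key[of "Inl s'" a] s' insert.prems(3)[of s' a] insert.hyps by auto
    finally show "\<beta> a s' = (\<Sum>t\<in>S. \<beta> a t * R' (Inl t) (Inl s')) + (\<Sum>q\<in>Yq. \<kappa> a q * R' (Inr q) (Inl s'))" by simp
  next
    fix a w assume w: "w \<in> Yw"
    have "(\<Sum>t\<in>S. \<beta> a t * R' (Inl t) (Inr w)) + (\<Sum>q\<in>Yq. \<kappa> a q * R' (Inr q) (Inr w)) =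
       (\<Sum>t\<in>S. \<beta> a t * R (Inl t) (Inr w)) + (\<Sum>q\<in>Yq. \<kappa> a q * R (Inr q) (Inr w)) +
       ((\<Sum>t\<in>S. \<beta> a t * R (Inl t) (Inl s)) + (\<Sum>q\<in>Yq. \<kappa> a q * R (Inr q) (Inl s))) * d (Inr w)"
      by (simp add: R'_def sum.distrib sum_distrib_left sum_distrib_right algebra_simps)
    also have "\<dots> = \<omega> a w"
      using key[of "Inr w" a] w insert.prems(4)[of w a] insert.hyps by auto
    finally show "\<omega> a w = (\<Sum>t\<in>S. \<beta> a t * R' (Inl t) (Inr w)) + (\<Sum>q\<in>Yq. \<kappa> a q * R' (Inr q) (Inr w))" by simp
  qed
  then show ?case .
qed


theorem lemma2:
  fixes W :: "'w channel" and Q :: "'q channel" and p eps :: real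
  assumes "symmetric_bidmc W" and "symmetric_bidmc Q"
    and "0 < p" and "p < 1" and "0 \<le> eps" and "eps \<le> 1"
    and "degraded (switch p (bsc eps) W) (switch p (bsc eps) Q)"
  shows "degraded W Q"
proof -
  obtain Yw Wf where W: "W = (Yw, Wf)" by (cases W)
  obtain Yq Qf where Q: "Q = (Yq, Qf)" by (cases Q)
  define B where "B = snd (bsc eps)"
  have fb: "fst (bsc eps) = UNIV" by (simp add: bsc_def)
  have fw: "finite Yw" and sw: "(\<Sum>y\<in>Yw. Wf False y) = 1"
    using assms(1) by (auto simp: symmetric_bidmc_def bidmc_def W)
  have fq: "finite Yq"
    using assms(2) by (auto simp: symmetric_bidmc_def bidmc_def Q)
  obtain w0 where w0: "w0 \<in> Yw" using sw by fastforce
  obtain R :: "bool + 'q \<Rightarrow> bool + 'w \<Rightarrow> real" where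
    nn: "\<forall>y\<in>UNIV <+> Yq. \<forall>y'\<in>UNIV <+> Yw. 0 \<le> R y y'" and
    rs: "\<forall>y\<in>UNIV <+> Yq. (\<Sum>y'\<in>UNIV <+> Yw. R y y') = 1" and
    eq: "\<forall>a. \<forall>y'\<in>UNIV <+> Yw. (case y' of Inl y \<Rightarrow> p * B a y | Inr y \<Rightarrow> (1 - p) * Wf a y) =
       (\<Sum>y\<in>UNIV <+> Yq. (case y of Inl y \<Rightarrow> p * B a y | Inr y \<Rightarrow> (1 - p) * Qf a y) * R y y')"
    using assms(7) unfolding B_def degraded_def switch_def W Q fb snd_conv fst_conv prod.case Let_def by blast
  have "\<exists>K. (\<forall>q\<in>Yq. \<forall>w\<in>Yw. 0 \<le> K q w) \<and> (\<forall>q\<in>Yq. (\<Sum>w\<in>Yw. K q w) = 1) \<and>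
     (\<forall>a. \<forall>w\<in>Yw. (1 - p) * Wf a w = (\<Sum>q\<in>Yq. ((1 - p) * Qf a q) * K q w))"
  proof (rule elim[where S = UNIV and R = R and \<beta> = "\<lambda>a b. p * B a b"])
    show "finite (UNIV :: bool set)" by simp
    show "finite Yq" by (rule fq)
    show "finite Yw" by (rule fw)
    show "w0 \<in> Yw" by (rule w0)
    show "\<And>x y. x \<in> UNIV <+> Yq \<Longrightarrow> y \<in> UNIV <+> Yw \<Longrightarrow> 0 \<le> R x y" using nn by blast
    show "\<And>x. x \<in> UNIV <+> Yq \<Longrightarrow> (\<Sum>t\<in>UNIV. R x (Inl t)) + (\<Sum>w\<in>Yw. R x (Inr w)) = 1"
      using rs fw by (simp add: sum.Plus comp_def)
    show "\<And>a s. s \<in> UNIV \<Longrightarrow> p * B a s = (\<Sum>t\<in>UNIV. p * B a t * R (Inl t) (Inl s)) + (\<Sum>q\<in>Yq. (1 - p) * Qf a q * R (Inr q) (Inl s))"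
    proof -
      fix a s
      show "p * B a s = (\<Sum>t\<in>UNIV. p * B a t * R (Inl t) (Inl s)) + (\<Sum>q\<in>Yq. (1 - p) * Qf a q * R (Inr q) (Inl s))"
        using eq[THEN spec[of _ a], THEN bspec[of _ _ "Inl s"], OF InlI[OF UNIV_I]] fq by (simp add: sum.Plus comp_def)
    qed
    show "\<And>a w. w \<in> Yw \<Longrightarrow> (1 - p) * Wf a w = (\<Sum>t\<in>UNIV. p * B a t * R (Inl t) (Inr w)) + (\<Sum>q\<in>Yq. (1 - p) * Qf a q * R (Inr q) (Inr w))"
    proof -
      fix a w assume "w \<in> Yw"
      then have "Inr w \<in> (UNIV::bool set) <+> Yw" by (rule InrI)
      then show "(1 - p) * Wf a w = (\<Sum>t\<in>UNIV. p * B a t * R (Inl t) (Inr w)) + (\<Sum>q\<in>Yq. (1 - p) * Qf a q * R (Inr q) (Inr w))"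
        using eq[THEN spec[of _ a], THEN bspec[of _ _ "Inr w"]] fq by (simp add: sum.Plus comp_def)
    qed
  qed
  then obtain K where K1: "\<forall>q\<in>Yq. \<forall>w\<in>Yw. 0 \<le> K q w" and K2: "\<forall>q\<in>Yq. (\<Sum>w\<in>Yw. K q w) = 1"
    and K3: "\<forall>a. \<forall>w\<in>Yw. (1 - p) * Wf a w = (\<Sum>q\<in>Yq. ((1 - p) * Qf a q) * K q w)" by blast
  have K3': "\<forall>a. \<forall>w\<in>Yw. Wf a w = (\<Sum>q\<in>Yq. Qf a q * K q w)"
  proof (intro allI ballI)
    fix a w assume "w \<in> Yw"
    then have "(1 - p) * Wf a w = (1 - p) * (\<Sum>q\<in>Yq. Qf a q * K q w)"
      using K3 by (simp add: sum_distrib_left mult.assoc)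
    then show "Wf a w = (\<Sum>q\<in>Yq. Qf a q * K q w)" using assms(4) by simp
  qed
  show ?thesis unfolding degraded_def W Q using K1 K2 K3' by auto
qed

end
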